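(* Let $G\le \mathrm{Aut}(X^* )$ be a closed self-similar subgroup with Haar probability measure $\mu$. Then for every $n,m\ge 1$, every $a\in\pi_n(G)$, every $b\in\pi_m(G)$ and every $v\in\mathcal{L}_n$ such that $C_a\cap\mathcal{T}_v^{-1}(C_b)\neq\emptyset$, we have $$\mu\big(C_a\cap\mathcal{T}_v^{-1}(C_b)\big)\ \ge\ \mu(C_a)\cdot\mu(C_b).$$
   Context: $X$ is a finite alphabet and $X^*$ the rooted regular tree of finite words over $X$; $\mathrm{Aut}(X^* )$ is its automorphism group with the profinite topology. For $g\in\mathrm{Aut}(X^* )$ and $v\in X^*$, the section $g|_v\in\mathrm{Aut}(X^* )$ is defined by $g(vw)=g(v)\,g|_v(w)$ for all $w\in X^*$. $G$ is self-similar if $g|_v\in G$ for all $g\in G$, $v\in X^*$. $X^n$ is the truncated tree of height $n$, $\mathcal{L}_n\subset X^*$ the set of vertices at distance $n$ from the root, and $\pi_n:G\to\mathrm{Aut}(X^n)$ the restriction map; $\mathrm{St}_G(n)=\ker\pi_n$. For $a\in\pi_n(G)$, the cone set is $C_a=\pi_n^{-1}(a)\subseteq G$. For $v\in X^*$, $\mathcal{T}_v:G\to G$ is the map $\mathcal{T}_v(g)=g|_v$. *)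

theory Defs
  imports "HOL-Probability.Probability"
begin

definition tree_aut :: "('x list \<Rightarrow> 'x list) \<Rightarrow> bool" where
  "tree_aut g \<longleftrightarrow> bij g \<and> g [] = [] \<and> (\<forall>v x. \<exists>y. g (v @ [x]) = g v @ [y])"

text \<open>Section g|_v, defined by g(vw) = g(v) g|_v(w).\<close>
definition sect :: "('x list \<Rightarrow> 'x list) \<Rightarrow> 'x list \<Rightarrow> ('x list \<Rightarrow> 'x list)" where
  "sect g v = (\<lambda>w. drop (length (g v)) (g (v @ w)))"

definition trunc :: "nat \<Rightarrow> ('x list \<Rightarrow> 'x list) \<Rightarrow> ('x list \<Rightarrow> 'x list)" where
  "trunc n g = restrict g {w. length w \<le> n}"

definition cone :: "('x list \<Rightarrow> 'x list) set \<Rightarrow> nat \<Rightarrow> ('x list \<Rightarrow> 'x list) \<Rightarrow> ('x list \<Rightarrow> 'x list) set" where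
  "cone G n a = {g \<in> G. trunc n g = a}"

definition aut_subgroup :: "('x list \<Rightarrow> 'x list) set \<Rightarrow> bool" where
  "aut_subgroup G \<longleftrightarrow> G \<subseteq> {g. tree_aut g} \<and> id \<in> G \<and>
     (\<forall>g\<in>G. \<forall>h\<in>G. g \<circ> h \<in> G) \<and> (\<forall>g\<in>G. inv g \<in> G)"

text \<open>Closedness in the profinite topology: every automorphism all of whose truncations
  are truncations of elements of G lies in G.\<close>
definition profinite_closed :: "('x list \<Rightarrow> 'x list) set \<Rightarrow> bool" where
  "profinite_closed G \<longleftrightarrow>
     (\<forall>g. tree_aut g \<and> (\<forall>n. \<exists>h\<in>G. trunc n h = trunc n g) \<longrightarrow> g \<in> G)"

definition self_similar :: "('x list \<Rightarrow> 'x list) set \<Rightarrow> bool" where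
  "self_similar G \<longleftrightarrow> (\<forall>g\<in>G. \<forall>v. sect g v \<in> G)"

text \<open>Haar probability measure on G: a probability measure on the Borel sets of G
  (the sigma algebra generated by the cone sets, which form a countable basis of the
  profinite topology on G) that is invariant under left translation.\<close>
definition haar_prob :: "('x list \<Rightarrow> 'x list) set \<Rightarrow> ('x list \<Rightarrow> 'x list) measure \<Rightarrow> bool" where
  "haar_prob G \<mu> \<longleftrightarrow> prob_space \<mu> \<and> space \<mu> = G \<and>
     sets \<mu> = sigma_sets G {cone G n a | n a. a \<in> trunc n ` G} \<and>
     (\<forall>g\<in>G. \<forall>A\<in>sets \<mu>. (\<lambda>h. g \<circ> h) ` A \<in> sets \<mu> \<and>
        emeasure \<mu> ((\<lambda>h. g \<circ> h) ` A) = emeasure \<mu> A)"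

end

theory Submission
  imports Defs
begin

lemma ta_step: "tree_aut g \<Longrightarrow> \<exists>y. g (v @ [x]) = g v @ [y]"
  unfolding tree_aut_def by (elim conjE) (rule spec[of _ x], rule spec[of _ v])

lemma ta_nil: "tree_aut g \<Longrightarrow> g [] = []"
  unfolding tree_aut_def by (elim conjE)

lemma ta_len: "tree_aut g \<Longrightarrow> length (g w) = length w"
proof (induction w rule: rev_induct)
  case Nil then show ?case by (simp add: ta_nil)
next
  case (snoc x w)
  then obtain y where "g (w @ [x]) = g w @ [y]" using ta_step by metis
  then show ?case using snoc by simp
qed

lemma ta_prefix: "tree_aut g \<Longrightarrow> \<exists>u. g (v @ w) = g v @ u"
proof (induction w rule: rev_induct)
  case Nil then show ?case by simp
next
  case (snoc x w)
  then obtain u where u: "g (v @ w) = g v @ u" by blast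
  obtain y where "g ((v @ w) @ [x]) = g (v @ w) @ [y]" using ta_step[OF snoc(2)] by metis
  then show ?case using u by simp
qed

lemma ta_sect: "tree_aut g \<Longrightarrow> g (v @ w) = g v @ sect g v w"
  using ta_prefix[of g v w] by (auto simp: sect_def)

lemma sect_comp: "tree_aut g \<Longrightarrow> tree_aut h \<Longrightarrow> sect (g \<circ> h) v = sect g (h v) \<circ> sect h v"
proof
  fix w assume g: "tree_aut g" and h: "tree_aut h"
  have 1: "h (v @ w) = h v @ sect h v w" by (rule ta_sect[OF h])
  have 2: "g (h v @ sect h v w) = g (h v) @ sect g (h v) (sect h v w)" by (rule ta_sect[OF g])
  have "sect (g \<circ> h) v w = drop (length (g (h v))) (g (h (v @ w)))"
    unfolding sect_def comp_def ..
  also have "\<dots> = sect g (h v) (sect h v w)" unfolding 1 2 by simp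
  finally show "sect (g \<circ> h) v w = (sect g (h v) \<circ> sect h v) w" unfolding comp_def .
qed

lemma sect_id: "sect id v = id"
  by (auto simp: sect_def)

lemma trunc_eq: "trunc k f = trunc k g \<longleftrightarrow> (\<forall>w. length w \<le> k \<longrightarrow> f w = g w)"
  unfolding trunc_def restrict_def fun_eq_iff by auto

lemma finite_trunc_img:
  assumes "\<forall>g\<in>G. tree_aut g"
  shows "finite (trunc k ` (G :: ('x::finite list \<Rightarrow> 'x list) set))"
proof -
  let ?A = "{w :: 'x list. length w \<le> k}"
  have fA: "finite ?A" using finite_lists_length_le[of "UNIV :: 'x set" k] by simp
  have "trunc k ` G \<subseteq> PiE ?A (\<lambda>_. ?A)"
    using assms by (auto simp: trunc_def ta_len split: if_splits)
  moreover have "finite (PiE ?A (\<lambda>_. ?A))" using fA by (intro finite_PiE) auto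
  ultimately show ?thesis by (rule finite_subset)
qed

locale hg =
  fixes G :: "('x::finite list \<Rightarrow> 'x list) set" and \<mu> :: "('x list \<Rightarrow> 'x list) measure"
  assumes sub: "aut_subgroup G" and ss: "self_similar G" and haar: "haar_prob G \<mu>"
begin

lemma ta: "g \<in> G \<Longrightarrow> tree_aut g" using sub by (auto simp: aut_subgroup_def)
lemma bijG: "g \<in> G \<Longrightarrow> bij g" using ta by (auto simp: tree_aut_def)
lemma compG: "g \<in> G \<Longrightarrow> h \<in> G \<Longrightarrow> g \<circ> h \<in> G" using sub by (auto simp: aut_subgroup_def)
lemma invG: "g \<in> G \<Longrightarrow> inv g \<in> G" using sub by (auto simp: aut_subgroup_def)
lemma idG: "id \<in> G" using sub by (auto simp: aut_subgroup_def)
lemma sectG: "g \<in> G \<Longrightarrow> sect g v \<in> G" using ss by (auto simp: self_similar_def)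
lemma ps: "prob_space \<mu>" using haar by (auto simp: haar_prob_def)
lemma sp: "space \<mu> = G" using haar by (auto simp: haar_prob_def)
lemma sets_eq: "sets \<mu> = sigma_sets G {cone G n a | n a. a \<in> trunc n ` G}"
  using haar by (auto simp: haar_prob_def)
lemma transl_e: "g \<in> G \<Longrightarrow> A \<in> sets \<mu> \<Longrightarrow> emeasure \<mu> ((\<lambda>h. g \<circ> h) ` A) = emeasure \<mu> A"
  using haar by (auto simp: haar_prob_def)
lemma transl: "g \<in> G \<Longrightarrow> A \<in> sets \<mu> \<Longrightarrow> measure \<mu> ((\<lambda>h. g \<circ> h) ` A) = measure \<mu> A"
  using transl_e by (simp add: measure_def)

lemma fin: "finite (trunc k ` G)"
  using finite_trunc_img ta by blast

lemma cone_sets: "c \<in> trunc k ` G \<Longrightarrow> cone G k c \<in> sets \<mu>"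
  unfolding sets_eq by (rule sigma_sets.Basic) blast

lemma meas_dep:
  assumes "A \<subseteq> G" "\<And>f g. f \<in> A \<Longrightarrow> g \<in> G \<Longrightarrow> trunc k f = trunc k g \<Longrightarrow> g \<in> A"
  shows "A \<in> sets \<mu>"
proof -
  have eq: "A = (\<Union>c\<in>trunc k ` A. cone G k c)"
    using assms by (auto simp: cone_def)
  have "finite (trunc k ` A)" using fin assms(1) by (meson finite_subset image_mono)
  moreover have "\<And>c. c \<in> trunc k ` A \<Longrightarrow> cone G k c \<in> sets \<mu>"
    using assms(1) by (intro cone_sets) blast
  ultimately have "(\<Union>c\<in>trunc k ` A. cone G k c) \<in> sets \<mu>" by blast
  then show ?thesis using eq by simp
qed

definition St where "St k = cone G k (trunc k id)"

lemma cone_transl: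
  assumes g: "g \<in> G" shows "cone G k (trunc k g) = (\<lambda>h. g \<circ> h) ` St k"
proof
  show "(\<lambda>h. g \<circ> h) ` St k \<subseteq> cone G k (trunc k g)"
    using g by (auto simp: St_def cone_def compG trunc_eq)
next
  show "cone G k (trunc k g) \<subseteq> (\<lambda>h. g \<circ> h) ` St k"
  proof
    fix f assume f: "f \<in> cone G k (trunc k g)"
    have fG: "f \<in> G" using f by (auto simp: cone_def)
    have b: "bij g" using bijG g by blast
    have "g \<circ> (inv g \<circ> f) = f" by (metis (no_types) b bij_is_surj surj_iff comp_assoc id_comp)
    moreover have "inv g \<circ> f \<in> St k"
    proof -
      have "\<And>w. length w \<le> k \<Longrightarrow> inv g (f w) = w"
        using f b by (auto simp: cone_def trunc_eq bij_is_inj)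
      then show ?thesis using fG g by (auto simp: St_def cone_def trunc_eq compG invG)
    qed
    ultimately show "f \<in> (\<lambda>h. g \<circ> h) ` St k" by (metis image_eqI)
  qed
qed

lemma St_sets: "St k \<in> sets \<mu>"
  unfolding St_def using idG by (intro cone_sets) blast

lemma cone_meas: "c \<in> trunc k ` G \<Longrightarrow> measure \<mu> (cone G k c) = measure \<mu> (St k)"
  using cone_transl transl St_sets by auto

lemma card_bound: "real (card (trunc m ` G)) * measure \<mu> (St m) \<le> 1"
proof -
  interpret prob_space \<mu> by (rule ps)
  have "measure \<mu> (\<Union>c\<in>trunc m ` G. cone G m c) = (\<Sum>c\<in>trunc m ` G. measure \<mu> (cone G m c))"
  proof (rule finite_measure_finite_Union[OF fin])
    show "cone G m ` trunc m ` G \<subseteq> events" using cone_sets by blast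
    show "disjoint_family_on (cone G m) (trunc m ` G)" by (auto simp: disjoint_family_on_def cone_def)
  qed
  also have "\<dots> = (\<Sum>c\<in>trunc m ` G. measure \<mu> (St m))"
    by (intro sum.cong refl cone_meas)
  finally show ?thesis by (metis prob_le_1 sum_constant)
qed

definition D where
  "D n m v g0 = {f \<in> G. trunc n f = trunc n g0 \<and> trunc m (sect f v) = trunc m (sect g0 v)}"

lemma D_sets: assumes lv: "length v = n" shows "D n m v g0 \<in> sets \<mu>"
proof (rule meas_dep[where k="n + m"])
  show "D n m v g0 \<subseteq> G" by (auto simp: D_def)
  fix f g assume f: "f \<in> D n m v g0" and g: "g \<in> G" and e: "trunc (n + m) f = trunc (n + m) g"
  have ev: "\<And>w. length w \<le> n + m \<Longrightarrow> f w = g w" using e by (simp add: trunc_eq)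
  have "trunc n g = trunc n f" using ev by (auto simp: trunc_eq)
  moreover have "trunc m (sect g v) = trunc m (sect f v)"
    unfolding trunc_eq
  proof (intro allI impI)
    fix w :: "'x list" assume w: "length w \<le> m"
    show "sect g v w = sect f v w" using w lv by (simp add: sect_def ev)
  qed
  ultimately show "g \<in> D n m v g0" using f g by (auto simp: D_def)
qed

lemma St_fix: "h \<in> G \<Longrightarrow> trunc n h = trunc n id \<Longrightarrow> length v = n \<Longrightarrow> h v = v"
  by (simp add: trunc_eq)

lemma D_transl:
  assumes lv: "length v = n" and g: "g \<in> G"
  shows "D n m v g = (\<lambda>h. g \<circ> h) ` D n m v id"
proof
  show "(\<lambda>h. g \<circ> h) ` D n m v id \<subseteq> D n m v g"
  proof
    fix f assume "f \<in> (\<lambda>h. g \<circ> h) ` D n m v id"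
    then obtain h where h: "h \<in> D n m v id" and fh: "f = g \<circ> h" by blast
    have hG: "h \<in> G" and h1: "trunc n h = trunc n id" and h2: "trunc m (sect h v) = trunc m id"
      using h by (auto simp: D_def sect_id)
    have hv: "h v = v" using St_fix hG h1 lv by blast
    have sc: "sect f v = sect g v \<circ> sect h v" using fh sect_comp[OF ta[OF g] ta[OF hG]] hv by simp
    have "trunc n f = trunc n g" using h1 fh by (auto simp: trunc_eq)
    moreover have "trunc m (sect f v) = trunc m (sect g v)" using h2 sc by (auto simp: trunc_eq)
    moreover have "f \<in> G" using fh compG g hG by blast
    ultimately show "f \<in> D n m v g" by (auto simp: D_def)
  qed
next
  show "D n m v g \<subseteq> (\<lambda>h. g \<circ> h) ` D n m v id"
  proof
    fix f assume f: "f \<in> D n m v g"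
    have fG: "f \<in> G" and f1: "trunc n f = trunc n g" and f2: "trunc m (sect f v) = trunc m (sect g v)"
      using f by (auto simp: D_def)
    have b: "bij g" using bijG g by blast
    define h where "h = inv g \<circ> f"
    have hG: "h \<in> G" unfolding h_def using fG g compG invG by blast
    have fh: "g \<circ> h = f" unfolding h_def by (metis (no_types) b bij_is_surj surj_iff comp_assoc id_comp)
    have "\<And>w. length w \<le> n \<Longrightarrow> h w = w"
      using f1 b by (auto simp: h_def trunc_eq bij_is_inj)
    then have h1: "trunc n h = trunc n id" by (simp add: trunc_eq)
    have hv: "h v = v" using St_fix hG h1 lv by blast
    have sc: "sect f v = sect g v \<circ> sect h v" using fh sect_comp[OF ta[OF g] ta[OF hG]] hv by auto
    have injs: "inj (sect g v)" using bijG[OF sectG[OF g]] bij_is_inj by blast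
    have "\<And>w. length w \<le> m \<Longrightarrow> sect h v w = w"
    proof -
      fix w :: "'x list" assume "length w \<le> m"
      then have "sect f v w = sect g v w" using f2 by (simp add: trunc_eq)
      then have "sect g v (sect h v w) = sect g v w" using sc by simp
      then show "sect h v w = w" using injs by (simp add: inj_eq)
    qed
    then have h2: "trunc m (sect h v) = trunc m (sect id v)" by (simp add: trunc_eq sect_id)
    have "h \<in> D n m v id" using hG h1 h2 by (simp add: D_def)
    then show "f \<in> (\<lambda>h. g \<circ> h) ` D n m v id" using fh by blast
  qed
qed

lemma D_meas: "length v = n \<Longrightarrow> g \<in> G \<Longrightarrow> measure \<mu> (D n m v g) = measure \<mu> (D n m v id)"
  using D_transl transl D_sets by metis

lemma St_bound:
  assumes lv: "length v = n"
  shows "measure \<mu> (St n) \<le> real (card (trunc m ` G)) * measure \<mu> (D n m v id)"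
proof -
  interpret prob_space \<mu> by (rule ps)
  define I where "I = (\<lambda>h. trunc m (sect h v)) ` St n"
  define E where "E c = {f \<in> G. trunc n f = trunc n id \<and> trunc m (sect f v) = c}" for c
  have IG: "I \<subseteq> trunc m ` G" unfolding I_def St_def cone_def using sectG by blast
  have fI: "finite I" using IG fin finite_subset by blast
  have ED: "\<And>c. c \<in> I \<Longrightarrow> \<exists>h\<in>G. E c = D n m v h"
  proof -
    fix c assume "c \<in> I"
    then obtain h where h: "h \<in> G" "trunc n h = trunc n id" "c = trunc m (sect h v)"
      unfolding I_def St_def cone_def by blast
    have "E c = D n m v h" unfolding E_def D_def using h by simp
    then show "\<exists>h\<in>G. E c = D n m v h" using h(1) by blast
  qed
  have Es: "E ` I \<subseteq> sets \<mu>" using ED D_sets[OF lv] by fastforce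
  have Em: "\<And>c. c \<in> I \<Longrightarrow> measure \<mu> (E c) = measure \<mu> (D n m v id)"
    using ED D_meas[OF lv] by metis
  have sub: "St n \<subseteq> (\<Union>c\<in>I. E c)" unfolding I_def E_def St_def cone_def by auto
  have "measure \<mu> (St n) \<le> measure \<mu> (\<Union>c\<in>I. E c)"
    using sub Es fI by (intro finite_measure_mono) auto
  also have "\<dots> \<le> (\<Sum>c\<in>I. measure \<mu> (E c))"
    by (rule finite_measure_subadditive_finite[OF fI Es])
  also have "\<dots> = real (card I) * measure \<mu> (D n m v id)" using Em by simp
  also have "\<dots> \<le> real (card (trunc m ` G)) * measure \<mu> (D n m v id)"
    using card_mono[OF fin IG] by (intro mult_right_mono) auto
  finally show ?thesis .
qed

lemma main:
  assumes lv: "length v = n" and a: "a \<in> trunc n ` G" and b: "b \<in> trunc m ` G"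
    and ne: "cone G n a \<inter> {g \<in> G. sect g v \<in> cone G m b} \<noteq> {}"
  shows "measure \<mu> (cone G n a \<inter> {g \<in> G. sect g v \<in> cone G m b})
             \<ge> measure \<mu> (cone G n a) * measure \<mu> (cone G m b)"
proof -
  interpret prob_space \<mu> by (rule ps)
  obtain g0 where g0: "g0 \<in> cone G n a \<inter> {g \<in> G. sect g v \<in> cone G m b}" using ne by blast
  have g0G: "g0 \<in> G" and ga: "a = trunc n g0" and gb: "b = trunc m (sect g0 v)"
    using g0 by (auto simp: cone_def)
  have T: "cone G n a \<inter> {g \<in> G. sect g v \<in> cone G m b} = D n m v g0"
  proof (rule set_eqI)
    fix f show "f \<in> cone G n a \<inter> {g \<in> G. sect g v \<in> cone G m b} \<longleftrightarrow> f \<in> D n m v g0"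
      using sectG[of f v] unfolding D_def cone_def ga gb by blast
  qed
  define K where "K = measure \<mu> (D n m v id)"
  define S where "S = measure \<mu> (St n)"
  define s where "s = measure \<mu> (St m)"
  define N where "N = real (card (trunc m ` G))"
  have mT: "measure \<mu> (cone G n a \<inter> {g \<in> G. sect g v \<in> cone G m b}) = K"
    unfolding T K_def using D_meas[OF lv g0G] .
  have ma: "measure \<mu> (cone G n a) = S" unfolding S_def using cone_meas[OF a] .
  have mb: "measure \<mu> (cone G m b) = s" unfolding s_def using cone_meas[OF b] .
  have h1: "S \<le> N * K" unfolding S_def N_def K_def using St_bound[OF lv] .
  have h2: "N * s \<le> 1" unfolding N_def s_def using card_bound .
  have s0: "s \<ge> 0" and K0: "K \<ge> 0" unfolding s_def K_def by auto
  have "S * s \<le> N * K * s" using h1 s0 by (rule mult_right_mono)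
  also have "\<dots> = K * (N * s)" by simp
  also have "\<dots> \<le> K * 1" using h2 K0 by (intro mult_left_mono)
  finally have "S * s \<le> K" by simp
  then show ?thesis unfolding mT ma mb .
qed

end

theorem lemma1:
  fixes G :: "('x::finite list \<Rightarrow> 'x list) set"
    and \<mu> :: "('x list \<Rightarrow> 'x list) measure"
  assumes "aut_subgroup G" and "profinite_closed G" and "self_similar G"
    and "haar_prob G \<mu>"
  shows "\<forall>n m a b v. n \<ge> 1 \<and> m \<ge> 1 \<and> a \<in> trunc n ` G \<and> b \<in> trunc m ` G \<and>
           length v = n \<and>
           cone G n a \<inter> {g \<in> G. sect g v \<in> cone G m b} \<noteq> {} \<longrightarrow>
           measure \<mu> (cone G n a \<inter> {g \<in> G. sect g v \<in> cone G m b})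
             \<ge> measure \<mu> (cone G n a) * measure \<mu> (cone G m b)"
proof -
  interpret hg G \<mu> using assms(1,3,4) by (rule hg.intro)
  show ?thesis using main by blast
qed

end
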